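(* Let $\varepsilon\in\{0,\tfrac12\}$ and let $\mathcal{SV}(\varepsilon)$ be the Schrödinger–Virasoro Lie algebra. A bilinear map $f:\mathcal{SV}(\varepsilon)\times\mathcal{SV}(\varepsilon)\to\mathcal{SV}(\varepsilon)$ is a biderivation of $\mathcal{SV}(\varepsilon)$ if and only if there exist $\lambda\in\mathbb{C}$ and a family $\Omega=\{\mu_i\in\mathbb{C}\mid i\in\mathbb{Z}\}$ with only finitely many nonzero $\mu_i$ such that $$f(x,y)=\lambda[x,y]+\chi_\Omega(x,y)\quad\text{for all }x,y\in\mathcal{SV}(\varepsilon).$$
   Context: For $\varepsilon\in\{0,\frac12\}$, $\mathcal{SV}(\varepsilon)$ is the complex Lie algebra with basis $\{L_i,Y_j,M_i\mid i\in\mathbb{Z},\ j\in\varepsilon+\mathbb{Z}\}$ and brackets $[L_m,L_n]=(m-n)L_{m+n}$, $[L_m,Y_n]=(\frac12 m-n)Y_{m+n}$, $[L_m,M_n]=-nM_{m+n}$, $[Y_m,Y_n]=(m-n)M_{m+n}$, $[Y_m,M_n]=[M_m,M_n]=0$. Write $\mathfrak{Y}=\bigoplus_{j\in\varepsilon+\mathbb{Z}}\mathbb{C}Y_j$ and $\mathfrak{M}=\bigoplus_{i\in\mathbb{Z}}\mathbb{C}M_i$. A biderivation of a Lie algebra $L$ is a bilinear map $f:L\times L\to L$ with $f([x,y],z)=[x,f(y,z)]+[f(x,z),y]$ and $f(x,[y,z])=[f(x,y),z]+[y,f(x,z)]$ for all $x,y,z\in L$. For a family $\Omega=\{\mu_i\}_{i\in\mathbb{Z}}$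 with finitely many nonzero entries, $\chi_\Omega$ is the bilinear map on $\mathcal{SV}(\varepsilon)$ defined by $\chi_\Omega(L_m,L_n)=\sum_{i\in\mathbb{Z}}\mu_iM_{m+n+i}$ for all $m,n\in\mathbb{Z}$, and $\chi_\Omega(x,y)=0$ whenever $x$ or $y$ is a basis element lying in $\mathfrak{Y}\cup\mathfrak{M}$. *)

theory Defs
  imports Complex_Main
begin

(* Basis of SV(eps): L m (m in Z), Y k standing for Y_{k+eps} (k in Z), M m (m in Z). *)
datatype svb = L int | Y int | M int

type_synonym sv = "svb \<Rightarrow> complex"

definition supp :: "sv \<Rightarrow> svb set" where
  "supp x = {b. x b \<noteq> 0}"

definition SV :: "sv set" where
  "SV = {x. finite (supp x)}"

definition vadd :: "sv \<Rightarrow> sv \<Rightarrow> sv" where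
  "vadd x y = (\<lambda>b. x b + y b)"

definition smul :: "complex \<Rightarrow> sv \<Rightarrow> sv" where
  "smul c x = (\<lambda>b. c * x b)"

definition sc :: "complex \<Rightarrow> svb \<Rightarrow> sv" where
  "sc c b = (\<lambda>b'. if b' = b then c else 0)"

(* 2*eps as an integer, for eps in {0, 1/2} *)
definition tw :: "complex \<Rightarrow> int" where
  "tw e = (if e = 0 then 0 else 1)"

fun brb :: "complex \<Rightarrow> svb \<Rightarrow> svb \<Rightarrow> sv" where
  "brb e (L m) (L n) = sc (of_int (m - n)) (L (m + n))"
| "brb e (L m) (Y n) = sc (of_int m / 2 - (of_int n + e)) (Y (m + n))"
| "brb e (L m) (M n) = sc (- of_int n) (M (m + n))"
| "brb e (Y n) (L m) = sc (- (of_int m / 2 - (of_int n + e))) (Y (m + n))"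
| "brb e (Y m) (Y n) = sc (of_int (m - n)) (M (m + n + tw e))"
| "brb e (Y m) (M n) = (\<lambda>_. 0)"
| "brb e (M n) (L m) = sc (of_int n) (M (m + n))"
| "brb e (M m) (Y n) = (\<lambda>_. 0)"
| "brb e (M m) (M n) = (\<lambda>_. 0)"

definition br :: "complex \<Rightarrow> sv \<Rightarrow> sv \<Rightarrow> sv" where
  "br e x y = (\<lambda>b. \<Sum>p\<in>supp x. \<Sum>q\<in>supp y. x p * y q * brb e p q b)"

fun chib :: "(int \<Rightarrow> complex) \<Rightarrow> svb \<Rightarrow> svb \<Rightarrow> sv" where
  "chib \<mu> (L m) (L n) = (\<lambda>b. case b of M k \<Rightarrow> \<mu> (k - m - n) | _ \<Rightarrow> 0)"
| "chib \<mu> _ _ = (\<lambda>_. 0)"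

definition chi :: "(int \<Rightarrow> complex) \<Rightarrow> sv \<Rightarrow> sv \<Rightarrow> sv" where
  "chi \<mu> x y = (\<lambda>b. \<Sum>p\<in>supp x. \<Sum>q\<in>supp y. x p * y q * chib \<mu> p q b)"

definition bilinear_sv :: "(sv \<Rightarrow> sv \<Rightarrow> sv) \<Rightarrow> bool" where
  "bilinear_sv f \<longleftrightarrow>
     (\<forall>x\<in>SV. \<forall>y\<in>SV. f x y \<in> SV) \<and>
     (\<forall>x\<in>SV. \<forall>y\<in>SV. \<forall>z\<in>SV. f (vadd x y) z = vadd (f x z) (f y z)) \<and>
     (\<forall>x\<in>SV. \<forall>y\<in>SV. \<forall>z\<in>SV. f x (vadd y z) = vadd (f x y) (f x z)) \<and>
     (\<forall>c. \<forall>x\<in>SV. \<forall>y\<in>SV. f (smul c x) y = smul c (f x y)) \<and>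
     (\<forall>c. \<forall>x\<in>SV. \<forall>y\<in>SV. f x (smul c y) = smul c (f x y))"

definition biderivation :: "complex \<Rightarrow> (sv \<Rightarrow> sv \<Rightarrow> sv) \<Rightarrow> bool" where
  "biderivation e f \<longleftrightarrow>
     (\<forall>x\<in>SV. \<forall>y\<in>SV. \<forall>z\<in>SV.
        f (br e x y) z = vadd (br e x (f y z)) (br e (f x z) y) \<and>
        f x (br e y z) = vadd (br e (f x y) z) (br e y (f x z)))"

end

theory Submission
  imports Defs
begin


fun lq :: "complex \<Rightarrow> svb \<Rightarrow> svb \<Rightarrow> svb" where
  "lq e (L m) (L j) = L (j-m)" | "lq e (L m) (Y j) = Y (j-m)" | "lq e (L m) (M j) = M (j-m)"
| "lq e (Y m) (L j) = L 0" | "lq e (Y m) (Y j) = L (j-m)" | "lq e (Y m) (M j) = Y (j-m-tw e)"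
| "lq e (M m) (L j) = L 0" | "lq e (M m) (Y j) = L 0" | "lq e (M m) (M j) = L (j-m)"

fun lc :: "complex \<Rightarrow> svb \<Rightarrow> svb \<Rightarrow> complex" where
  "lc e (L m) (L j) = of_int (2*m - j)"
| "lc e (L m) (Y j) = of_int m / 2 - (of_int (j-m) + e)"
| "lc e (L m) (M j) = - of_int (j-m)"
| "lc e (Y m) (L j) = 0"
| "lc e (Y m) (Y j) = - (of_int (j-m) / 2 - (of_int m + e))"
| "lc e (Y m) (M j) = of_int (m - (j - m - tw e))"
| "lc e (M m) (L j) = 0" | "lc e (M m) (Y j) = 0"
| "lc e (M m) (M j) = of_int m"

definition lactf :: "complex \<Rightarrow> svb \<Rightarrow> sv \<Rightarrow> svb \<Rightarrow> complex" where
  "lactf e a w t = lc e a t * w (lq e a t)"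

lemma brb_pt: "brb e a q t = (if q = lq e a t then lc e a t else 0)"
  by (cases a; cases q; cases t) (auto simp: sc_def algebra_simps)

fun bk :: "complex \<Rightarrow> svb \<Rightarrow> svb \<Rightarrow> complex" where
  "bk e (L m) (L n) = of_int (m-n)" | "bk e (L m) (Y n) = of_int m / 2 - (of_int n + e)"
| "bk e (L m) (M n) = - of_int n"
| "bk e (Y n) (L m) = - (of_int m / 2 - (of_int n + e))" | "bk e (Y m) (Y n) = of_int (m-n)"
| "bk e (Y m) (M n) = 0"
| "bk e (M n) (L m) = of_int n" | "bk e (M m) (Y n) = 0" | "bk e (M m) (M n) = 0"

fun bt :: "complex \<Rightarrow> svb \<Rightarrow> svb \<Rightarrow> svb" where
  "bt e (L m) (L n) = L (m+n)" | "bt e (L m) (Y n) = Y (m+n)" | "bt e (L m) (M n) = M (m+n)"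
| "bt e (Y n) (L m) = Y (m+n)" | "bt e (Y m) (Y n) = M (m+n+tw e)" | "bt e (Y m) (M n) = L 0"
| "bt e (M n) (L m) = M (m+n)" | "bt e (M m) (Y n) = L 0" | "bt e (M m) (M n) = L 0"

lemma brb_sc: "brb e a b = sc (bk e a b) (bt e a b)"
  by (cases a; cases b) (auto simp: sc_def fun_eq_iff)

fun dg :: "complex \<Rightarrow> svb \<Rightarrow> int" where
  "dg e (L m) = 2*m" | "dg e (Y k) = 2*k + tw e" | "dg e (M m) = 2*m"

definition BD1 :: "complex \<Rightarrow> (svb \<Rightarrow> svb \<Rightarrow> sv) \<Rightarrow> bool" where
  "BD1 e H \<longleftrightarrow> (\<forall>a b c t. bk e a b * H (bt e a b) c t = lactf e a (H b c) t - lactf e b (H a c) t)"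
definition BD2 :: "complex \<Rightarrow> (svb \<Rightarrow> svb \<Rightarrow> sv) \<Rightarrow> bool" where
  "BD2 e H \<longleftrightarrow> (\<forall>a b c t. bk e b c * H a (bt e b c) t = lactf e b (H a c) t - lactf e c (H a b) t)"

lemma jac1: assumes "of_int (tw e) = 2*e" shows "BD1 e (brb e)"
  unfolding BD1_def lactf_def
  apply (intro allI)
  subgoal for a b c t
  using assms by (cases a; cases b; cases c; cases t) (auto simp: sc_def field_simps)
  done

lemma jac2: assumes "of_int (tw e) = 2*e" shows "BD2 e (brb e)"
  unfolding BD2_def lactf_def
  apply (intro allI)
  subgoal for a b c t
  using assms by (cases a; cases b; cases c; cases t) (auto simp: sc_def field_simps)
  done

lemma chi1: "BD1 e (chib mu)"
  unfolding BD1_def lactf_def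
  apply (intro allI)
  subgoal for a b c t
  by (cases a; cases b; cases c; cases t) (auto simp: sc_def field_simps)
  done

lemma chi2: "BD2 e (chib mu)"
  unfolding BD2_def lactf_def
  apply (intro allI)
  subgoal for a b c t
  by (cases a; cases b; cases c; cases t) (auto simp: sc_def field_simps)
  done

lemma BD1_lin: assumes "BD1 e H1" "BD1 e H2" shows "BD1 e (\<lambda>a b t. c1 * H1 a b t + c2 * H2 a b t)"
  unfolding BD1_def lactf_def
proof (intro allI)
  fix a b c t
  have 1: "bk e a b * H1 (bt e a b) c t = lc e a t * H1 b c (lq e a t) - lc e b t * H1 a c (lq e b t)"
    using assms(1) unfolding BD1_def lactf_def by blast
  have 2: "bk e a b * H2 (bt e a b) c t = lc e a t * H2 b c (lq e a t) - lc e b t * H2 a c (lq e b t)"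
    using assms(2) unfolding BD1_def lactf_def by blast
  show "bk e a b * (c1 * H1 (bt e a b) c t + c2 * H2 (bt e a b) c t) =
    lc e a t * (c1 * H1 b c (lq e a t) + c2 * H2 b c (lq e a t)) - lc e b t * (c1 * H1 a c (lq e b t) + c2 * H2 a c (lq e b t))"
    using 1 2 by algebra
qed

lemma BD2_lin: assumes "BD2 e H1" "BD2 e H2" shows "BD2 e (\<lambda>a b t. c1 * H1 a b t + c2 * H2 a b t)"
  unfolding BD2_def lactf_def
proof (intro allI)
  fix a b c t
  have 1: "bk e b c * H1 a (bt e b c) t = lc e b t * H1 a c (lq e b t) - lc e c t * H1 a b (lq e c t)"
    using assms(1) unfolding BD2_def lactf_def by blast
  have 2: "bk e b c * H2 a (bt e b c) t = lc e b t * H2 a c (lq e b t) - lc e c t * H2 a b (lq e c t)"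
    using assms(2) unfolding BD2_def lactf_def by blast
  show "bk e b c * (c1 * H1 a (bt e b c) t + c2 * H2 a (bt e b c) t) =
    lc e b t * (c1 * H1 a c (lq e b t) + c2 * H2 a c (lq e b t)) - lc e c t * (c1 * H1 a b (lq e c t) + c2 * H2 a b (lq e c t))"
    using 1 2 by algebra
qed



lemma tw01: "tw e = 0 \<or> tw e = 1" by (simp add: tw_def)

lemma bkL0: "of_int (tw e) = 2*e \<Longrightarrow> bk e (L 0) b = - of_int (dg e b) / 2"
  by (cases b) (auto simp: field_simps)
lemma btL0: "bt e (L 0) b = b" by (cases b) auto
lemma lcL0: "of_int (tw e) = 2*e \<Longrightarrow> lc e (L 0) t = - of_int (dg e t) / 2"
  by (cases t) (auto simp: field_simps)
lemma lqL0: "lq e (L 0) t = t" by (cases t) auto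

lemma Li:
  assumes he: "of_int (tw e) = 2*e" and B: "BD1 e G"
  shows "of_int (dg e t - dg e b) * G b c t = - 2 * lactf e b (G (L 0) c) t"
proof -
  have "bk e (L 0) b * G (bt e (L 0) b) c t = lactf e (L 0) (G b c) t - lactf e b (G (L 0) c) t"
    using B unfolding BD1_def by blast
  then show ?thesis using he by (simp add: bkL0 btL0 lactf_def lcL0 lqL0 field_simps)
qed

lemma Lii:
  assumes he: "of_int (tw e) = 2*e" and B: "BD2 e G"
  shows "of_int (dg e t - dg e c) * G a c t = - 2 * lactf e c (G a (L 0)) t"
proof -
  have "bk e (L 0) c * G a (bt e (L 0) c) t = lactf e (L 0) (G a c) t - lactf e c (G a (L 0)) t"
    using B unfolding BD2_def by blast
  then show ?thesis using he by (simp add: bkL0 btL0 lactf_def lcL0 lqL0 field_simps)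
qed

lemma alpha_lemma:
  fixes al al' :: "int \<Rightarrow> complex"
  assumes H: "\<And>m n. m \<noteq> 0 \<Longrightarrow> n \<noteq> 0 \<Longrightarrow> of_int m * of_int (n-m) * al n = of_int n * of_int (m-n) * al' m"
    and a1: "al 1 = 0"
  shows "\<forall>n. n \<noteq> 0 \<longrightarrow> al n = 0" and "\<forall>m. m \<noteq> 0 \<longrightarrow> al' m = 0"
proof -
  have p1: "al' m = 0" if "m \<noteq> 0" "m \<noteq> 1" for m
    using H[of m 1] that a1 by simp
  have p2: "al n = 0" if "n \<noteq> 0" for n
  proof -
    define m :: int where "m = (if n = 2 then 3 else 2)"
    have "m \<noteq> 0" "m \<noteq> 1" "n - m \<noteq> 0" by (auto simp: m_def)
    then have "of_int m * of_int (n-m) * al n = 0" using H[of m n] p1[of m] that by simp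
    then show ?thesis using \<open>m \<noteq> 0\<close> \<open>n - m \<noteq> 0\<close> by simp
  qed
  have "al' 1 = 0" using H[of 1 2] p2[of 2] by simp
  then show "\<forall>n. n \<noteq> 0 \<longrightarrow> al n = 0" and "\<forall>m. m \<noteq> 0 \<longrightarrow> al' m = 0"
    using p1 p2 by auto
qed

lemma gamma_lemma:
  fixes ga ga' :: "int \<Rightarrow> complex"
  assumes H: "\<And>m n. m \<noteq> 0 \<Longrightarrow> n \<noteq> 0 \<Longrightarrow> of_int m * (of_int m / 2 - of_int n) * ga n = of_int n * (of_int n / 2 - of_int m) * ga' m"
  shows "\<forall>n. n \<noteq> 0 \<longrightarrow> ga n = 0" and "\<forall>m. m \<noteq> 0 \<longrightarrow> ga' m = 0"
proof -
  have q1: "ga n = ga' n" if "n \<noteq> 0" for n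
    using H[of n n] that by (simp add: field_simps)
  have q2: "ga' (2*n) = 0" if "n \<noteq> 0" for n
  proof -
    have "of_int n * (of_int n / 2 - of_int (2*n)) * ga' (2*n) = (0::complex)"
      using H[of "2*n" n] that by simp
    moreover have "of_int n * (of_int n / 2 - of_int (2*n)) \<noteq> (0::complex)" using that by (simp add: field_simps)
    ultimately show ?thesis by simp
  qed
  have g2: "ga' 2 = 0" using q2[of 1] by simp
  have q3: "ga n = 0" if "n \<noteq> 0" "n \<noteq> 1" for n
  proof -
    have "of_int 2 * (of_int 2 / 2 - of_int n) * ga n = (0::complex)"
      using H[of 2 n] that g2 by simp
    moreover have "of_int 2 * (of_int 2 / 2 - of_int n) \<noteq> (0::complex)" using that by (simp add: field_simps)
    ultimately show ?thesis by simp
  qed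
  have "ga' 3 = 0" using q1[of 3] q3[of 3] by simp
  then have "ga 1 = 0" using H[of 3 1] by (simp add: field_simps)
  then have A: "\<forall>n. n \<noteq> 0 \<longrightarrow> ga n = 0" using q3 by auto
  then show "\<forall>n. n \<noteq> 0 \<longrightarrow> ga n = 0" .
  show "\<forall>m. m \<noteq> 0 \<longrightarrow> ga' m = 0" using A q1 by auto
qed

lemma lactf0: "lactf e a (\<lambda>_. 0) t = 0" by (simp add: lactf_def)

fun shf :: "svb \<Rightarrow> int \<Rightarrow> svb" where
  "shf (L j) m = L (j+m)" | "shf (Y j) m = Y (j+m)" | "shf (M j) m = M (j+m)"
fun chm :: "complex \<Rightarrow> svb \<Rightarrow> int" where
  "chm e (L j) = (if j = 1 then 2 else 1)" | "chm e (Y j) = (if 2*j + tw e = 1 then 2 else 1)"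
| "chm e (M j) = 1"

lemma lq_shf: "lq e (L m) (shf s m) = s" by (cases s) auto
lemma dg_shf: "dg e (shf s m) = dg e s + 2*m" by (cases s) auto
lemma chm_nz: "chm e s \<noteq> 0" by (cases s) auto
lemma lc_chm: assumes he: "of_int (tw e) = 2*e" and "dg e s \<noteq> 0"
  shows "lc e (L (chm e s)) (shf s (chm e s)) \<noteq> 0"
proof (cases s)
  case (Y j)
  have "of_int (if 2*j + tw e = 1 then 2 else 1) / 2 - (of_int j + e) =
      (of_int (if 2*j + tw e = 1 then 2 else 1) - of_int (2*j + tw e)) / (2::complex)"
    using he by (simp add: field_simps)
  also have "\<dots> \<noteq> 0" by (simp only: of_int_diff[symmetric]) (auto simp del: of_int_diff)
  finally show ?thesis using Y by simp
qed (use assms in auto)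

lemma decomp: assumes he: "of_int (tw e) = 2*e"
  shows "\<exists>x y. bk e x y \<noteq> 0 \<and> bt e x y = s \<and> dg e x \<noteq> dg e s \<and> dg e y \<noteq> dg e s"
proof (cases s)
  case (L n)
  show ?thesis
  proof (cases "n = 0")
    case True
    then show ?thesis using L by (intro exI[of _ "L 1"] exI[of _ "L (-1)"]) simp
  next
    case False
    then show ?thesis using L by (intro exI[of _ "L (2*n)"] exI[of _ "L (-n)"]) simp
  qed
next
  case (Y j)
  define k where "k = 2*j + tw e"
  define m where "m = 2*k + 1"
  have b1: "bk e (L m) (Y (j - m)) = (of_int (5*k+3)) / 2"
    using he by (simp add: m_def k_def field_simps)
  have b2: "(of_int (5*k+3)) / (2::complex) \<noteq> 0"
  proof -
    have "5*k+3 \<noteq> 0" by presburger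
    then show ?thesis by (metis divide_eq_0_iff of_int_eq_0_iff zero_neq_numeral)
  qed
  have "bk e (L m) (Y (j - m)) \<noteq> 0" using b1 b2 by metis
  moreover have "dg e (L m) \<noteq> dg e s"
    using Y tw01[of e] unfolding m_def k_def by simp presburger
  moreover have "dg e (Y (j-m)) \<noteq> dg e s"
    using Y tw01[of e] unfolding m_def k_def by simp presburger
  ultimately show ?thesis using Y by (intro exI[of _ "L m"] exI[of _ "Y (j-m)"]) simp
next
  case (M j)
  define m where "m = (if j = -1 then 1 else j+1)"
  have "m \<noteq> 0" "m \<noteq> j" by (auto simp: m_def)
  then show ?thesis using M by (intro exI[of _ "L m"] exI[of _ "M (j-m)"]) simp
qed

lemma core2:
  assumes he: "of_int (tw e) = 2*e" and B1: "BD1 e G" and B2: "BD2 e G"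
    and P0: "G (L 0) (L 0) = (\<lambda>_. 0)" and N: "G (L 0) (L 1) (L 1) = 0"
  shows "G a b = (\<lambda>_. 0)"
proof -
  have Adiag: "G (L 0) c t = 0" if "dg e t \<noteq> dg e c" for c t
    using Lii[OF he B2, of t c "L 0"] that by (simp add: P0 lactf0)
  have Bdiag: "G b (L 0) t = 0" if "dg e t \<noteq> dg e b" for b t
    using Li[OF he B1, of t b "L 0"] that by (simp add: P0 lactf0)
  have eqL1: "2 * of_int n * G (L m) (L n) (L (m+n)) = 2 * (of_int n - of_int m) * G (L 0) (L n) (L n)" for m n
    using Li[OF he B1, of "L (m+n)" "L m" "L n"] by (simp add: lactf_def algebra_simps)
  have eqL2: "2 * of_int m * G (L m) (L n) (L (m+n)) = 2 * (of_int m - of_int n) * G (L m) (L 0) (L m)" for m n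
    using Lii[OF he B2, of "L (m+n)" "L n" "L m"] by (simp add: lactf_def algebra_simps)
  have eqM1: "2 * of_int n * G (L m) (L n) (M (m+n)) = 2 * of_int n * G (L 0) (L n) (M n)" for m n
    using Li[OF he B1, of "M (m+n)" "L m" "L n"] by (simp add: lactf_def algebra_simps)
  have eqM2: "2 * of_int m * G (L m) (L n) (M (m+n)) = 2 * of_int m * G (L m) (L 0) (M m)" for m n
    using Lii[OF he B2, of "M (m+n)" "L n" "L m"] by (simp add: lactf_def algebra_simps)
  have eqY1: "2 * of_int n * G (L m) (L n) (Y (m+n)) = - 2 * (of_int m / 2 - of_int n) * G (L 0) (L n) (Y n)" if "tw e = 0" for m n
  proof -
    have "e = 0" using he that by simp
    then show ?thesis using that Li[OF he B1, of "Y (m+n)" "L m" "L n"] by (simp add: lactf_def algebra_simps)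
  qed
  have eqY2: "2 * of_int m * G (L m) (L n) (Y (m+n)) = - 2 * (of_int n / 2 - of_int m) * G (L m) (L 0) (Y m)" if "tw e = 0" for m n
  proof -
    have "e = 0" using he that by simp
    then show ?thesis using that Lii[OF he B2, of "Y (m+n)" "L n" "L m"] by (simp add: lactf_def algebra_simps)
  qed
  have Hal: "of_int m * of_int (n-m) * G (L 0) (L n) (L n) = of_int n * of_int (m-n) * G (L m) (L 0) (L m)"
    if "m \<noteq> 0" "n \<noteq> 0" for m n
    using eqL1[of n m] eqL2[of m n] by (simp add: algebra_simps) algebra
  obtain al_A: "\<forall>n. n \<noteq> 0 \<longrightarrow> G (L 0) (L n) (L n) = 0" and al_B: "\<forall>m. m \<noteq> 0 \<longrightarrow> G (L m) (L 0) (L m) = 0"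
    using alpha_lemma[of "\<lambda>n. G (L 0) (L n) (L n)" "\<lambda>m. G (L m) (L 0) (L m)", OF Hal] N by auto
  have Hbe: "G (L 0) (L n) (M n) = G (L m) (L 0) (M m)" if "m \<noteq> 0" "n \<noteq> 0" for m n
    using eqM1[of n m] eqM2[of m n] that by simp
  have b0: "G (L 0) (L 1) (M 1) + G (L 0) (L (-1)) (M (-1)) = 0"
  proof -
    have "bk e (L 1) (L (-1)) * G (L 0) (bt e (L 1) (L (-1))) (M 0) =
      lactf e (L 1) (G (L 0) (L (-1))) (M 0) - lactf e (L (-1)) (G (L 0) (L 1)) (M 0)"
      using B2 unfolding BD2_def by blast
    then show ?thesis by (simp add: P0 lactf_def add_ac)
  qed
  have be_A: "G (L 0) (L n) (M n) = 0" and be_B: "G (L n) (L 0) (M n) = 0" if "n \<noteq> 0" for n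
  proof -
    have "G (L 0) (L 1) (M 1) = G (L 0) (L (-1)) (M (-1))" using Hbe[of 1 1] Hbe[of 1 "-1"] by simp
    then have z: "G (L 0) (L 1) (M 1) = 0" using b0 by simp
    show "G (L 0) (L n) (M n) = 0" using Hbe[of 1 n] Hbe[of 1 1] z that by simp
    show "G (L n) (L 0) (M n) = 0" using Hbe[of n 1] z that by simp
  qed
  have ga: "G (L 0) (L n) (Y n) = 0 \<and> G (L n) (L 0) (Y n) = 0" if "tw e = 0" "n \<noteq> 0" for n
  proof -
    have Hg: "of_int m * (of_int m / 2 - of_int n) * G (L 0) (L n) (Y n) = of_int n * (of_int n / 2 - of_int m) * G (L m) (L 0) (Y m)"
      if "m \<noteq> 0" "n \<noteq> 0" for m n
      using eqY1[OF \<open>tw e = 0\<close>, of n m] eqY2[OF \<open>tw e = 0\<close>, of m n] by algebra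
    show ?thesis
      using gamma_lemma[of "\<lambda>n. G (L 0) (L n) (Y n)" "\<lambda>m. G (L m) (L 0) (Y m)", OF Hg] that by auto
  qed
  have AL: "G (L 0) (L n) = (\<lambda>_. 0)" and BL: "G (L n) (L 0) = (\<lambda>_. 0)" if "n \<noteq> 0" for n
  proof -
    have yy: "tw e = 0 \<and> j = n" if "dg e (Y j) = 2*n" for j
      using that tw01[of e] by (auto; presburger)
    show "G (L 0) (L n) = (\<lambda>_. 0)"
    proof
      fix t show "G (L 0) (L n) t = 0"
      proof (cases t)
        case (L j) then show ?thesis using al_A \<open>n \<noteq> 0\<close> Adiag[of t "L n"] by (cases "j = n") auto
      next
        case (M j) then show ?thesis using be_A[OF \<open>n \<noteq> 0\<close>] Adiag[of t "L n"] by (cases "j = n") auto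
      next
        case (Y j) then show ?thesis using ga[of n] yy[of j] \<open>n \<noteq> 0\<close> Adiag[of t "L n"]
          by (cases "dg e (Y j) = 2*n") auto
      qed
    qed
    show "G (L n) (L 0) = (\<lambda>_. 0)"
    proof
      fix t show "G (L n) (L 0) t = 0"
      proof (cases t)
        case (L j) then show ?thesis using al_B \<open>n \<noteq> 0\<close> Bdiag[of t "L n"] by (cases "j = n") auto
      next
        case (M j) then show ?thesis using be_B[OF \<open>n \<noteq> 0\<close>] Bdiag[of t "L n"] by (cases "j = n") auto
      next
        case (Y j) then show ?thesis using ga[of n] yy[of j] \<open>n \<noteq> 0\<close> Bdiag[of t "L n"]
          by (cases "dg e (Y j) = 2*n") auto
      qed
    qed
  qed
  have A0: "G (L 0) c = (\<lambda>_. 0)" if "dg e c \<noteq> 0" for c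
  proof
    fix s show "G (L 0) c s = 0"
    proof (cases "dg e s = dg e c")
      case False then show ?thesis using Adiag by auto
    next
      case True
      define m where "m = chm e s"
      define t where "t = shf s m"
      have m0: "m \<noteq> 0" using chm_nz m_def by auto
      have lcnz: "lc e (L m) t \<noteq> 0" using lc_chm[OF he] True that m_def t_def by auto
      have "of_int (dg e t - dg e c) * G (L m) c t = - 2 * lactf e c (G (L m) (L 0)) t"
        using Lii[OF he B2] .
      then have z: "G (L m) c t = 0" using BL[OF m0] True m0 by (simp add: t_def dg_shf lactf0)
      have "of_int (dg e t - dg e (L m)) * G (L m) c t = - 2 * lactf e (L m) (G (L 0) c) t"
        using Li[OF he B1] .
      then show ?thesis using z lcnz by (simp add: lactf_def t_def lq_shf)
    qed
  qed
  have B0: "G b (L 0) = (\<lambda>_. 0)" if "dg e b \<noteq> 0" for b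
  proof
    fix s show "G b (L 0) s = 0"
    proof (cases "dg e s = dg e b")
      case False then show ?thesis using Bdiag by auto
    next
      case True
      define m where "m = chm e s"
      define t where "t = shf s m"
      have m0: "m \<noteq> 0" using chm_nz m_def by auto
      have lcnz: "lc e (L m) t \<noteq> 0" using lc_chm[OF he] True that m_def t_def by auto
      have "of_int (dg e t - dg e b) * G b (L m) t = - 2 * lactf e b (G (L 0) (L m)) t"
        using Li[OF he B1] .
      then have z: "G b (L m) t = 0" using AL[OF m0] True m0 by (simp add: t_def dg_shf lactf0)
      have "of_int (dg e t - dg e (L m)) * G b (L m) t = - 2 * lactf e (L m) (G b (L 0)) t"
        using Lii[OF he B2] .
      then show ?thesis using z lcnz by (simp add: lactf_def t_def lq_shf)
    qed
  qed
  have Aall: "G (L 0) c = (\<lambda>_. 0)" for c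
  proof (cases "dg e c = 0")
    case False then show ?thesis using A0 by auto
  next
    case True
    obtain x y where xy: "bk e x y \<noteq> 0" "bt e x y = c" "dg e x \<noteq> dg e c" "dg e y \<noteq> dg e c"
      using decomp[OF he] by blast
    show ?thesis
    proof
      fix t
      have "bk e x y * G (L 0) (bt e x y) t = lactf e x (G (L 0) y) t - lactf e y (G (L 0) x) t"
        using B2 unfolding BD2_def by blast
      then show "G (L 0) c t = 0" using xy True A0[of x] A0[of y] by (simp add: lactf0)
    qed
  qed
  have Ball: "G b (L 0) = (\<lambda>_. 0)" for b
  proof (cases "dg e b = 0")
    case False then show ?thesis using B0 by auto
  next
    case True
    obtain x y where xy: "bk e x y \<noteq> 0" "bt e x y = b" "dg e x \<noteq> dg e b" "dg e y \<noteq> dg e b"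
      using decomp[OF he] by blast
    show ?thesis
    proof
      fix t
      have "bk e x y * G (bt e x y) (L 0) t = lactf e x (G y (L 0)) t - lactf e y (G x (L 0)) t"
        using B1 unfolding BD1_def by blast
      then show "G b (L 0) t = 0" using xy True B0[of x] B0[of y] by (simp add: lactf0)
    qed
  qed
  have off: "G b c = (\<lambda>_. 0)" if "dg e b \<noteq> dg e c" for b c
  proof
    fix t show "G b c t = 0"
    proof (cases "dg e t = dg e b")
      case False then show ?thesis using Li[OF he B1, of t b c] Aall by (simp add: lactf0)
    next
      case True then show ?thesis using that Lii[OF he B2, of t c b] Ball by (simp add: lactf0)
    qed
  qed
  show ?thesis
  proof (cases "dg e a = dg e b")
    case False then show ?thesis using off by auto
  next
    case True
    obtain x y where xy: "bk e x y \<noteq> 0" "bt e x y = a" "dg e x \<noteq> dg e a" "dg e y \<noteq> dg e a"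
      using decomp[OF he] by blast
    show ?thesis
    proof
      fix t
      have "bk e x y * G (bt e x y) b t = lactf e x (G y b) t - lactf e y (G x b) t"
        using B1 unfolding BD1_def by blast
      then show "G a b t = 0" using xy True off[of y b] off[of x b] by (simp add: lactf0)
    qed
  qed
qed

lemma core:
  assumes he: "of_int (tw e) = 2*e" and B1: "BD1 e G" and B2: "BD2 e G"
    and fin: "finite (supp (G (L 0) (L 0)))"
  shows "\<exists>lam \<mu>. finite {i. \<mu> i \<noteq> 0} \<and> (\<forall>a b. G a b = (\<lambda>t. lam * brb e a b t + chib \<mu> a b t))"
proof -
  define P where "P = G (L 0) (L 0)"
  have PL: "P (L k) = 0" for k
  proof (cases "k = 0")
    case True
    have "of_int (dg e (L 1) - dg e (L 1)) * G (L 0) (L 1) (L 1) = - 2 * lactf e (L 1) (G (L 0) (L 0)) (L 1)"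
      using Lii[OF he B2] .
    then show ?thesis using True by (simp add: lactf_def P_def)
  next
    case False
    have h1: "of_int (dg e (L (3*k)) - dg e (L (2*k))) * G (L 0) (L (2*k)) (L (3*k)) = - 2 * lactf e (L (2*k)) (G (L 0) (L 0)) (L (3*k))"
      using Lii[OF he B2] .
    have h2: "of_int (dg e (L (4*k)) - dg e (L k)) * G (L k) (L (2*k)) (L (4*k)) = - 2 * lactf e (L k) (G (L 0) (L (2*k))) (L (4*k))"
      using Li[OF he B1] .
    have h3: "of_int (dg e (L (4*k)) - dg e (L (2*k))) * G (L k) (L (2*k)) (L (4*k)) = - 2 * lactf e (L (2*k)) (G (L k) (L 0)) (L (4*k))"
      using Lii[OF he B2] .
    have "G (L k) (L (2*k)) (L (4*k)) = 0" using h3 False by (simp add: lactf_def)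
    then have "G (L 0) (L (2*k)) (L (3*k)) = 0" using h2 False by (simp add: lactf_def)
    then show ?thesis using h1 False by (simp add: lactf_def P_def)
  qed
  have PY: "P (Y k) = 0" for k
  proof (cases "2*k + tw e = 0")
    case True
    then have "tw e = 0" "k = 0" using tw01[of e] by (auto; presburger)+
    then have "e = 0" using he by simp
    have "of_int (dg e (Y 1) - dg e (L 1)) * G (L 0) (L 1) (Y 1) = - 2 * lactf e (L 1) (G (L 0) (L 0)) (Y 1)"
      using Lii[OF he B2] .
    then show ?thesis using \<open>tw e = 0\<close> \<open>k = 0\<close> \<open>e = 0\<close> by (simp add: lactf_def P_def)
  next
    case False
    define q where "q = 2*k + tw e"
    define m where "m = q"
    define n where "n = 2*q"
    have q0: "q \<noteq> 0" using False q_def by simp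
    have e1: "of_int (dg e (Y (k+m)) - dg e (L m)) * G (L m) (L 0) (Y (k+m)) = - 2 * lactf e (L m) (G (L 0) (L 0)) (Y (k+m))"
      using Li[OF he B1] .
    have lc1: "lc e (L m) (Y (k+m)) = 0" using he by (simp add: m_def q_def field_simps)
    have z1: "G (L m) (L 0) (Y (k+m)) = 0"
    proof -
      have d: "dg e (Y (k+m)) - dg e (L m) = q" by (simp add: m_def q_def)
      have "of_int (dg e (Y (k+m)) - dg e (L m)) * G (L m) (L 0) (Y (k+m)) = 0"
        using e1 unfolding lactf_def lc1 by simp
      then have "of_int q * G (L m) (L 0) (Y (k+m)) = 0" unfolding d .
      then show ?thesis using q0 by simp
    qed
    have e2: "of_int (dg e (Y (k+m+n)) - dg e (L n)) * G (L m) (L n) (Y (k+m+n)) = - 2 * lactf e (L n) (G (L m) (L 0)) (Y (k+m+n))"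
      using Lii[OF he B2] .
    have z2: "G (L m) (L n) (Y (k+m+n)) = 0"
    proof -
      have "of_int (dg e (Y (k+m+n)) - dg e (L n)) * G (L m) (L n) (Y (k+m+n)) = 0"
        using e2 z1 by (simp add: lactf_def algebra_simps)
      moreover have "dg e (Y (k+m+n)) - dg e (L n) = 3*q" by (simp add: m_def n_def q_def)
      ultimately have "of_int (3*q) * G (L m) (L n) (Y (k+m+n)) = 0" by metis
      then show ?thesis using q0 by simp
    qed
    have e3: "of_int (dg e (Y (k+m+n)) - dg e (L m)) * G (L m) (L n) (Y (k+m+n)) = - 2 * lactf e (L m) (G (L 0) (L n)) (Y (k+m+n))"
      using Li[OF he B1] .
    have lc3: "lc e (L m) (Y (k+m+n)) = - of_int n" using he by (simp add: m_def n_def q_def field_simps)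
    have z3: "G (L 0) (L n) (Y (k+n)) = 0"
    proof -
      have "- of_int n * G (L 0) (L n) (Y (k+n)) = 0"
        using e3 z2 unfolding lactf_def lc3 by (simp add: algebra_simps)
      then show ?thesis using q0 by (simp add: n_def)
    qed
    have e4: "of_int (dg e (Y (k+n)) - dg e (L n)) * G (L 0) (L n) (Y (k+n)) = - 2 * lactf e (L n) (G (L 0) (L 0)) (Y (k+n))"
      using Lii[OF he B2] .
    have lc4: "lc e (L n) (Y (k+n)) = of_int q / 2" using he by (simp add: n_def q_def field_simps)
    have "of_int q / 2 * G (L 0) (L 0) (Y k) = 0"
      using e4 z3 unfolding lactf_def lc4 by (simp add: n_def)
    then show ?thesis using q0 by (simp add: P_def)
  qed
  define mu where "mu = (\<lambda>i. P (M i))"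
  define lam where "lam = - G (L 0) (L 1) (L 1)"
  have finmu: "finite {i. mu i \<noteq> 0}"
  proof -
    have "{i. mu i \<noteq> 0} = M -` supp P" by (auto simp: mu_def supp_def)
    then show ?thesis using finite_vimageI[of "supp P" M] fin by (simp add: P_def inj_def)
  qed
  define g where "g = (\<lambda>a b t. G a b t - lam * brb e a b t - chib mu a b t)"
  have gg: "g = (\<lambda>a b t. 1 * (\<lambda>a b t. 1 * G a b t + (-lam) * brb e a b t) a b t + (-1) * chib mu a b t)"
    by (simp add: g_def)
  have g1: "BD1 e g" unfolding gg by (rule BD1_lin[OF BD1_lin[OF B1 jac1[OF he]] chi1])
  have g2: "BD2 e g" unfolding gg by (rule BD2_lin[OF BD2_lin[OF B2 jac2[OF he]] chi2])
  have g00: "g (L 0) (L 0) = (\<lambda>_. 0)"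
  proof
    fix t show "g (L 0) (L 0) t = 0"
      by (cases t) (auto simp: g_def sc_def PL PY mu_def P_def[symmetric])
  qed
  have g01: "g (L 0) (L 1) (L 1) = 0" by (simp add: g_def lam_def sc_def)
  have gz: "g a b = (\<lambda>_. 0)" for a b by (rule core2[OF he g1 g2 g00 g01])
  have "\<forall>a b. G a b = (\<lambda>t. lam * brb e a b t + chib mu a b t)"
  proof (intro allI ext)
    fix a b t
    have "g a b t = 0" using gz by simp
    then have "G a b t - lam * brb e a b t - chib mu a b t = 0" by (simp add: g_def)
    then show "G a b t = lam * brb e a b t + chib mu a b t" by algebra
  qed
  then show ?thesis using finmu by blast
qed

definition ext :: "(svb \<Rightarrow> svb \<Rightarrow> sv) \<Rightarrow> sv \<Rightarrow> sv \<Rightarrow> sv" where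
  "ext K x y = (\<lambda>t. \<Sum>p\<in>supp x. \<Sum>q\<in>supp y. x p * y q * K p q t)"

lemma br_ext: "br e = ext (brb e)" by (simp add: br_def ext_def fun_eq_iff)
lemma chi_ext: "chi mu = ext (chib mu)" by (simp add: chi_def ext_def fun_eq_iff)

lemma supp_sc: "supp (sc k b) = (if k = 0 then {} else {b})"
  by (auto simp: supp_def sc_def)

lemma sum_supp_sup:
  assumes "finite S" "supp w \<subseteq> S"
  shows "(\<Sum>s\<in>supp w. w s * g s) = (\<Sum>s\<in>S. w s * g s)"
  by (rule sum.mono_neutral_left) (use assms in \<open>auto simp: supp_def\<close>)

lemma ext_supp: "supp (ext K x y) \<subseteq> (\<Union>p\<in>supp x. \<Union>q\<in>supp y. supp (K p q))"
proof
  fix t assume t: "t \<in> supp (ext K x y)"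
  show "t \<in> (\<Union>p\<in>supp x. \<Union>q\<in>supp y. supp (K p q))"
  proof (rule ccontr)
    assume "t \<notin> (\<Union>p\<in>supp x. \<Union>q\<in>supp y. supp (K p q))"
    then have "\<forall>p\<in>supp x. \<forall>q\<in>supp y. K p q t = 0" by (auto simp: supp_def)
    then have "ext K x y t = 0" by (simp add: ext_def)
    then show False using t by (simp add: supp_def)
  qed
qed

lemma ext_SV:
  assumes "x \<in> SV" "y \<in> SV" "\<And>p q. finite (supp (K p q))"
  shows "ext K x y \<in> SV"
  using assms ext_supp[of K x y] unfolding SV_def by (auto intro: finite_subset)

lemma swap4:
  "(\<Sum>s\<in>S. \<Sum>p\<in>A. \<Sum>q\<in>B. \<Sum>r\<in>C. f s p q r) = (\<Sum>p\<in>A. \<Sum>q\<in>B. \<Sum>r\<in>C. \<Sum>s\<in>S. f s p q r)"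
proof -
  have "(\<Sum>s\<in>S. \<Sum>p\<in>A. \<Sum>q\<in>B. \<Sum>r\<in>C. f s p q r) = (\<Sum>p\<in>A. \<Sum>s\<in>S. \<Sum>q\<in>B. \<Sum>r\<in>C. f s p q r)"
    by (rule sum.swap)
  also have "\<dots> = (\<Sum>p\<in>A. \<Sum>q\<in>B. \<Sum>s\<in>S. \<Sum>r\<in>C. f s p q r)"
    by (rule sum.cong[OF refl], rule sum.swap)
  also have "\<dots> = (\<Sum>p\<in>A. \<Sum>q\<in>B. \<Sum>r\<in>C. \<Sum>s\<in>S. f s p q r)"
    by (rule sum.cong[OF refl], rule sum.cong[OF refl], rule sum.swap)
  finally show ?thesis .
qed

lemma compC1:
  assumes x: "x \<in> SV" and y: "y \<in> SV" and KF: "\<And>p q. finite (supp (K2 p q))"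
  shows "ext K1 (ext K2 x y) z t = (\<Sum>p\<in>supp x. \<Sum>q\<in>supp y. \<Sum>r\<in>supp z.
            x p * y q * z r * (\<Sum>s\<in>supp (K2 p q). K2 p q s * K1 s r t))"
proof -
  define S where "S = (\<Union>p\<in>supp x. \<Union>q\<in>supp y. supp (K2 p q))"
  have finS: "finite S" using x y KF by (auto simp: S_def SV_def)
  have sub: "supp (ext K2 x y) \<subseteq> S" using ext_supp unfolding S_def .
  have "ext K1 (ext K2 x y) z t = (\<Sum>s\<in>supp (ext K2 x y). ext K2 x y s * (\<Sum>r\<in>supp z. z r * K1 s r t))"
    by (simp add: ext_def sum_distrib_left mult.assoc)
  also have "\<dots> = (\<Sum>s\<in>S. ext K2 x y s * (\<Sum>r\<in>supp z. z r * K1 s r t))"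
    by (rule sum_supp_sup[OF finS sub])
  also have "\<dots> = (\<Sum>s\<in>S. \<Sum>p\<in>supp x. \<Sum>q\<in>supp y. \<Sum>r\<in>supp z. x p * y q * z r * (K2 p q s * K1 s r t))"
    by (simp add: ext_def sum_distrib_left sum_distrib_right algebra_simps)
  also have "\<dots> = (\<Sum>p\<in>supp x. \<Sum>q\<in>supp y. \<Sum>r\<in>supp z. \<Sum>s\<in>S. x p * y q * z r * (K2 p q s * K1 s r t))"
    by (rule swap4)
  also have "\<dots> = (\<Sum>p\<in>supp x. \<Sum>q\<in>supp y. \<Sum>r\<in>supp z. x p * y q * z r * (\<Sum>s\<in>S. K2 p q s * K1 s r t))"
    by (simp add: sum_distrib_left)
  also have "\<dots> = (\<Sum>p\<in>supp x. \<Sum>q\<in>supp y. \<Sum>r\<in>supp z. x p * y q * z r * (\<Sum>s\<in>supp (K2 p q). K2 p q s * K1 s r t))"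
  proof (intro sum.cong refl)
    fix p q r assume "p \<in> supp x" "q \<in> supp y"
    then have "supp (K2 p q) \<subseteq> S" by (auto simp: S_def)
    then show "x p * y q * z r * (\<Sum>s\<in>S. K2 p q s * K1 s r t) = x p * y q * z r * (\<Sum>s\<in>supp (K2 p q). K2 p q s * K1 s r t)"
      using sum_supp_sup[OF finS] by metis
  qed
  finally show ?thesis .
qed

lemma swap3:
  "(\<Sum>s\<in>S. \<Sum>q\<in>B. \<Sum>r\<in>C. f s q r) = (\<Sum>q\<in>B. \<Sum>r\<in>C. \<Sum>s\<in>S. f s q r)"
proof -
  have "(\<Sum>s\<in>S. \<Sum>q\<in>B. \<Sum>r\<in>C. f s q r) = (\<Sum>q\<in>B. \<Sum>s\<in>S. \<Sum>r\<in>C. f s q r)"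
    by (rule sum.swap)
  also have "\<dots> = (\<Sum>q\<in>B. \<Sum>r\<in>C. \<Sum>s\<in>S. f s q r)"
    by (rule sum.cong[OF refl], rule sum.swap)
  finally show ?thesis .
qed

lemma ext_left: "ext K x w t = (\<Sum>p\<in>supp x. x p * (\<Sum>s\<in>supp w. w s * K p s t))"
  by (simp add: ext_def sum_distrib_left mult.assoc)

lemma compC2:
  assumes y: "y \<in> SV" and z: "z \<in> SV" and KF: "\<And>p q. finite (supp (K2 p q))"
  shows "ext K1 x (ext K2 y z) t = (\<Sum>p\<in>supp x. \<Sum>q\<in>supp y. \<Sum>r\<in>supp z.
            x p * y q * z r * (\<Sum>s\<in>supp (K2 q r). K2 q r s * K1 p s t))"
proof -
  define S where "S = (\<Union>q\<in>supp y. \<Union>r\<in>supp z. supp (K2 q r))"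
  have finS: "finite S" using y z KF by (auto simp: S_def SV_def)
  have sub: "supp (ext K2 y z) \<subseteq> S" using ext_supp unfolding S_def .
  have "ext K1 x (ext K2 y z) t = (\<Sum>p\<in>supp x. x p * (\<Sum>s\<in>supp (ext K2 y z). ext K2 y z s * K1 p s t))"
    by (rule ext_left)
  also have "\<dots> = (\<Sum>p\<in>supp x. x p * (\<Sum>s\<in>S. ext K2 y z s * K1 p s t))"
    using sum_supp_sup[OF finS sub] by simp
  also have "\<dots> = (\<Sum>p\<in>supp x. \<Sum>s\<in>S. \<Sum>q\<in>supp y. \<Sum>r\<in>supp z. x p * y q * z r * (K2 q r s * K1 p s t))"
    by (simp add: ext_def sum_distrib_left sum_distrib_right algebra_simps)
  also have "\<dots> = (\<Sum>p\<in>supp x. \<Sum>q\<in>supp y. \<Sum>r\<in>supp z. \<Sum>s\<in>S. x p * y q * z r * (K2 q r s * K1 p s t))"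
    by (rule sum.cong[OF refl], rule swap3)
  also have "\<dots> = (\<Sum>p\<in>supp x. \<Sum>q\<in>supp y. \<Sum>r\<in>supp z. x p * y q * z r * (\<Sum>s\<in>S. K2 q r s * K1 p s t))"
    by (simp add: sum_distrib_left)
  also have "\<dots> = (\<Sum>p\<in>supp x. \<Sum>q\<in>supp y. \<Sum>r\<in>supp z. x p * y q * z r * (\<Sum>s\<in>supp (K2 q r). K2 q r s * K1 p s t))"
  proof (intro sum.cong refl)
    fix p q r assume "q \<in> supp y" "r \<in> supp z"
    then have "supp (K2 q r) \<subseteq> S" by (auto simp: S_def)
    then show "x p * y q * z r * (\<Sum>s\<in>S. K2 q r s * K1 p s t) = x p * y q * z r * (\<Sum>s\<in>supp (K2 q r). K2 q r s * K1 p s t)"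
      using sum_supp_sup[OF finS] by metis
  qed
  finally show ?thesis .
qed

lemma brb_anti: "brb e p b t = - brb e b p t"
  by (cases p; cases b) (auto simp: sc_def)

lemma lact_sum: assumes "finite (supp w)"
  shows "(\<Sum>s\<in>supp w. w s * brb e a s t) = lactf e a w t"
proof -
  have "(\<Sum>s\<in>supp w. w s * brb e a s t) = (\<Sum>s\<in>supp w. if s = lq e a t then w s * lc e a t else 0)"
    by (rule sum.cong) (auto simp: brb_pt)
  also have "\<dots> = (if lq e a t \<in> supp w then w (lq e a t) * lc e a t else 0)"
    using assms by (simp add: sum.delta')
  also have "\<dots> = lactf e a w t" by (auto simp: lactf_def supp_def)
  finally show ?thesis .
qed

lemma ract_sum: assumes "finite (supp w)"
  shows "(\<Sum>s\<in>supp w. w s * brb e s b t) = - lactf e b w t"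
proof -
  have "(\<Sum>s\<in>supp w. w s * brb e s b t) = - (\<Sum>s\<in>supp w. w s * brb e b s t)"
    by (simp add: brb_anti[of e _ b t] sum_negf)
  then show ?thesis using lact_sum[OF assms] by simp
qed

lemma bk_sum: "(\<Sum>s\<in>supp (brb e p q). brb e p q s * K s r t) = bk e p q * K (bt e p q) r t"
  by (simp add: brb_sc supp_sc) (simp add: sc_def)

lemma lin_exp:
  assumes hadd: "\<forall>u\<in>SV. \<forall>v\<in>SV. \<phi> (vadd u v) = vadd (\<phi> u) (\<phi> v)"
    and hsm: "\<forall>c. \<forall>u\<in>SV. \<phi> (smul c u) = smul c (\<phi> u)"
    and x: "x \<in> SV"
  shows "\<phi> x t = (\<Sum>p\<in>supp x. x p * \<phi> (sc 1 p) t)"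
proof -
  define u where "u S = (\<lambda>b. if b \<in> S then x b else 0)" for S
  have uSV: "u S \<in> SV" if "finite S" for S
    using that by (auto simp: SV_def supp_def u_def intro: finite_subset)
  have scSV: "sc c p \<in> SV" for c p by (simp add: SV_def supp_sc)
  have z: "(\<lambda>_. 0::complex) \<in> SV" by (simp add: SV_def supp_def)
  have ind: "\<phi> (u S) t = (\<Sum>p\<in>S. x p * \<phi> (sc 1 p) t)" if "finite S" for S
    using that
  proof (induction S rule: finite_induct)
    case empty
    have "u {} = smul 0 (\<lambda>_. 0)" by (simp add: u_def smul_def)
    then have "\<phi> (u {}) = smul 0 (\<phi> (\<lambda>_. 0))" using hsm z by simp
    then show ?case by (simp add: smul_def)
  next
    case (insert p S)
    have "u (insert p S) = vadd (u S) (smul (x p) (sc 1 p))"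
      using insert by (auto simp: u_def vadd_def smul_def sc_def fun_eq_iff)
    moreover have "smul (x p) (sc 1 p) \<in> SV" by (simp add: smul_def SV_def supp_def sc_def)
    ultimately have "\<phi> (u (insert p S)) = vadd (\<phi> (u S)) (smul (x p) (\<phi> (sc 1 p)))"
      using hadd hsm uSV[OF insert(1)] scSV by simp
    then show ?case using insert by (simp add: vadd_def smul_def)
  qed
  have "u (supp x) = x" by (auto simp: u_def supp_def fun_eq_iff)
  moreover have "finite (supp x)" using x by (simp add: SV_def)
  ultimately show ?thesis using ind by metis
qed



lemma sc1SV: "sc 1 a \<in> SV" by (simp add: SV_def supp_sc)
lemma supp_sc1: "supp (sc 1 a) = {a}" by (simp add: supp_sc)

lemma br_sc_sc: "br e (sc 1 a) (sc 1 b) = brb e a b"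
  unfolding br_def supp_sc1 by (simp add: sc_def fun_eq_iff)

lemma br_sc_l: "finite (supp w) \<Longrightarrow> br e (sc 1 a) w = (\<lambda>t. lactf e a w t)"
  by (simp add: br_def supp_sc1 fun_eq_iff lact_sum[symmetric]) (simp add: sc_def)

lemma br_sc_r: "finite (supp w) \<Longrightarrow> br e w (sc 1 b) = (\<lambda>t. - lactf e b w t)"
  by (simp add: br_def supp_sc1 fun_eq_iff ract_sum[symmetric]) (simp add: sc_def)

lemma sc_smul: "sc k b = smul k (sc 1 b)" by (simp add: sc_def smul_def fun_eq_iff)

lemma bider_BD:
  assumes bl: "bilinear_sv f" and bd: "biderivation e f"
  shows "BD1 e (\<lambda>p q. f (sc 1 p) (sc 1 q))" and "BD2 e (\<lambda>p q. f (sc 1 p) (sc 1 q))"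
proof -
  have inSV: "f x y \<in> SV" if "x \<in> SV" "y \<in> SV" for x y using bl that unfolding bilinear_sv_def by blast
  have fin: "finite (supp (f (sc 1 p) (sc 1 q)))" for p q using inSV[OF sc1SV sc1SV] by (simp add: SV_def)
  have sm1: "f (smul c x) y = smul c (f x y)" if "x \<in> SV" "y \<in> SV" for c x y
    using bl that unfolding bilinear_sv_def by blast
  have sm2: "f x (smul c y) = smul c (f x y)" if "x \<in> SV" "y \<in> SV" for c x y
    using bl that unfolding bilinear_sv_def by blast
  show "BD1 e (\<lambda>p q. f (sc 1 p) (sc 1 q))"
    unfolding BD1_def
  proof (intro allI)
    fix a b c t
    have "f (br e (sc 1 a) (sc 1 b)) (sc 1 c) = vadd (br e (sc 1 a) (f (sc 1 b) (sc 1 c))) (br e (f (sc 1 a) (sc 1 c)) (sc 1 b))"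
      using bd sc1SV unfolding biderivation_def by blast
    moreover have "f (br e (sc 1 a) (sc 1 b)) (sc 1 c) = smul (bk e a b) (f (sc 1 (bt e a b)) (sc 1 c))"
      by (simp add: br_sc_sc brb_sc sc_smul[of "bk e a b"] sm1 sc1SV)
    ultimately show "bk e a b * f (sc 1 (bt e a b)) (sc 1 c) t = lactf e a (f (sc 1 b) (sc 1 c)) t - lactf e b (f (sc 1 a) (sc 1 c)) t"
      by (simp add: br_sc_l br_sc_r fin smul_def vadd_def fun_eq_iff)
  qed
  show "BD2 e (\<lambda>p q. f (sc 1 p) (sc 1 q))"
    unfolding BD2_def
  proof (intro allI)
    fix a b c t
    have "f (sc 1 a) (br e (sc 1 b) (sc 1 c)) = vadd (br e (f (sc 1 a) (sc 1 b)) (sc 1 c)) (br e (sc 1 b) (f (sc 1 a) (sc 1 c)))"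
      using bd sc1SV unfolding biderivation_def by blast
    moreover have "f (sc 1 a) (br e (sc 1 b) (sc 1 c)) = smul (bk e b c) (f (sc 1 a) (sc 1 (bt e b c)))"
      by (simp add: br_sc_sc brb_sc sc_smul[of "bk e b c"] sm2 sc1SV)
    ultimately show "bk e b c * f (sc 1 a) (sc 1 (bt e b c)) t = lactf e b (f (sc 1 a) (sc 1 c)) t - lactf e c (f (sc 1 a) (sc 1 b)) t"
      by (simp add: br_sc_l br_sc_r fin smul_def vadd_def fun_eq_iff)
  qed
qed

lemma f_exp:
  assumes bl: "bilinear_sv f" and x: "x \<in> SV" and y: "y \<in> SV"
  shows "f x y = ext (\<lambda>p q. f (sc 1 p) (sc 1 q)) x y"
proof
  fix t
  have A: "\<forall>u\<in>SV. \<forall>v\<in>SV. (\<lambda>x. f x y) (vadd u v) = vadd ((\<lambda>x. f x y) u) ((\<lambda>x. f x y) v)"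
    using bl y unfolding bilinear_sv_def by blast
  have B: "\<forall>c. \<forall>u\<in>SV. (\<lambda>x. f x y) (smul c u) = smul c ((\<lambda>x. f x y) u)"
    using bl y unfolding bilinear_sv_def by blast
  have 1: "f x y t = (\<Sum>p\<in>supp x. x p * f (sc 1 p) y t)"
    using lin_exp[OF A B x] by simp
  have 2: "f (sc 1 p) y t = (\<Sum>q\<in>supp y. y q * f (sc 1 p) (sc 1 q) t)" for p
  proof -
    have A: "\<forall>u\<in>SV. \<forall>v\<in>SV. f (sc 1 p) (vadd u v) = vadd (f (sc 1 p) u) (f (sc 1 p) v)"
      using bl sc1SV unfolding bilinear_sv_def by blast
    have B: "\<forall>c. \<forall>u\<in>SV. f (sc 1 p) (smul c u) = smul c (f (sc 1 p) u)"
      using bl sc1SV unfolding bilinear_sv_def by blast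
    show ?thesis using lin_exp[OF A B y] by simp
  qed
  show "f x y t = ext (\<lambda>p q. f (sc 1 p) (sc 1 q)) x y t"
    by (simp add: 1 2 ext_def sum_distrib_left mult.assoc)
qed

lemma h_ext: "vadd (smul lam (br e x y)) (chi mu x y) = ext (\<lambda>p q t. lam * brb e p q t + chib mu p q t) x y"
  by (simp add: br_ext chi_ext ext_def vadd_def smul_def fun_eq_iff sum_distrib_left sum.distrib algebra_simps)

lemma brbF: "finite (supp (brb e p q))" by (simp add: brb_sc supp_sc)

lemma chibF: assumes "finite {i. mu i \<noteq> 0}" shows "finite (supp (chib mu p q))"
proof (cases "\<exists>m n. p = L m \<and> q = L n")
  case True
  then obtain m n where pq: "p = L m" "q = L n" by blast
  have eq: "{k. mu (k - m - n) \<noteq> 0} = (\<lambda>i. i + m + n) ` {i. mu i \<noteq> 0}"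
  proof (intro set_eqI iffI)
    fix k assume "k \<in> {k. mu (k - m - n) \<noteq> 0}"
    then show "k \<in> (\<lambda>i. i + m + n) ` {i. mu i \<noteq> 0}"
      by (intro image_eqI[where x = "k - m - n"]) auto
  qed auto
  have "supp (chib mu p q) \<subseteq> M ` {k. mu (k - m - n) \<noteq> 0}"
  proof
    fix t assume "t \<in> supp (chib mu p q)"
    then show "t \<in> M ` {k. mu (k - m - n) \<noteq> 0}"
      using pq by (cases t) (auto simp: supp_def)
  qed
  then show ?thesis using assms eq by (auto intro: finite_subset)
next
  case False
  then have "chib mu p q = (\<lambda>_. 0)" by (cases p; cases q) auto
  then show ?thesis by (simp add: supp_def)
qed

lemma H_bider:
  fixes lam :: complex
  assumes he: "of_int (tw e) = 2*e" and fmu: "finite {i. mu i \<noteq> 0}"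
    and x: "x \<in> SV" and y: "y \<in> SV" and z: "z \<in> SV"
  defines "H \<equiv> (\<lambda>p q t. lam * brb e p q t + chib mu p q t)"
  shows "ext H (ext (brb e) x y) z = vadd (ext (brb e) x (ext H y z)) (ext (brb e) (ext H x z) y)"
    and "ext H x (ext (brb e) y z) = vadd (ext (brb e) (ext H x y) z) (ext (brb e) y (ext H x z))"
proof -
  have HF: "finite (supp (H p q))" for p q
  proof -
    have "supp (H p q) \<subseteq> supp (brb e p q) \<union> supp (chib mu p q)" by (auto simp: H_def supp_def)
    then show ?thesis using brbF chibF[OF fmu] by (auto intro: finite_subset)
  qed
  have B1: "BD1 e H"
  proof -
    have "BD1 e (\<lambda>a b t. lam * brb e a b t + 1 * chib mu a b t)" by (rule BD1_lin[OF jac1[OF he] chi1])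
    then show ?thesis by (simp add: H_def)
  qed
  have B2: "BD2 e H"
  proof -
    have "BD2 e (\<lambda>a b t. lam * brb e a b t + 1 * chib mu a b t)" by (rule BD2_lin[OF jac2[OF he] chi2])
    then show ?thesis by (simp add: H_def)
  qed
  show "ext H (ext (brb e) x y) z = vadd (ext (brb e) x (ext H y z)) (ext (brb e) (ext H x z) y)"
  proof
    fix t
    have L: "ext H (ext (brb e) x y) z t = (\<Sum>p\<in>supp x. \<Sum>q\<in>supp y. \<Sum>r\<in>supp z. x p * y q * z r * (bk e p q * H (bt e p q) r t))"
      by (simp add: compC1[OF x y brbF] bk_sum)
    have R1: "ext (brb e) x (ext H y z) t = (\<Sum>p\<in>supp x. \<Sum>q\<in>supp y. \<Sum>r\<in>supp z. x p * y q * z r * lactf e p (H q r) t)"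
      by (simp add: compC2[OF y z HF] lact_sum[OF HF])
    have R2: "ext (brb e) (ext H x z) y t = (\<Sum>p\<in>supp x. \<Sum>q\<in>supp y. \<Sum>r\<in>supp z. x p * y q * z r * (- lactf e q (H p r) t))"
    proof -
      have "ext (brb e) (ext H x z) y t = (\<Sum>p\<in>supp x. \<Sum>r\<in>supp z. \<Sum>q\<in>supp y. x p * z r * y q * (- lactf e q (H p r) t))"
        by (simp add: compC1[OF x z HF] ract_sum[OF HF])
      also have "\<dots> = (\<Sum>p\<in>supp x. \<Sum>q\<in>supp y. \<Sum>r\<in>supp z. x p * z r * y q * (- lactf e q (H p r) t))"
        by (rule sum.cong[OF refl], rule sum.swap)
      finally show ?thesis by (simp add: algebra_simps)
    qed
    have "ext H (ext (brb e) x y) z t = (\<Sum>p\<in>supp x. \<Sum>q\<in>supp y. \<Sum>r\<in>supp z.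
        x p * y q * z r * lactf e p (H q r) t + x p * y q * z r * (- lactf e q (H p r) t))"
      unfolding L
    proof (intro sum.cong refl)
      fix p q r
      have "bk e p q * H (bt e p q) r t = lactf e p (H q r) t - lactf e q (H p r) t"
        using B1 unfolding BD1_def by blast
      then show "x p * y q * z r * (bk e p q * H (bt e p q) r t) =
        x p * y q * z r * lactf e p (H q r) t + x p * y q * z r * - lactf e q (H p r) t"
        by algebra
    qed
    then show "ext H (ext (brb e) x y) z t = vadd (ext (brb e) x (ext H y z)) (ext (brb e) (ext H x z) y) t"
      by (simp only: vadd_def R1 R2 sum.distrib)
  qed
  show "ext H x (ext (brb e) y z) = vadd (ext (brb e) (ext H x y) z) (ext (brb e) y (ext H x z))"
  proof
    fix t
    have bs: "(\<Sum>s\<in>supp (brb e q r). brb e q r s * H p s t) = bk e q r * H p (bt e q r) t" for p q r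
      using bk_sum[of e q r "\<lambda>s _. H p s" r t] by simp
    have L: "ext H x (ext (brb e) y z) t = (\<Sum>p\<in>supp x. \<Sum>q\<in>supp y. \<Sum>r\<in>supp z. x p * y q * z r * (bk e q r * H p (bt e q r) t))"
      by (simp add: compC2[OF y z brbF] bs)
    have R1: "ext (brb e) (ext H x y) z t = (\<Sum>p\<in>supp x. \<Sum>q\<in>supp y. \<Sum>r\<in>supp z. x p * y q * z r * (- lactf e r (H p q) t))"
      by (simp add: compC1[OF x y HF] ract_sum[OF HF])
    have R2: "ext (brb e) y (ext H x z) t = (\<Sum>p\<in>supp x. \<Sum>q\<in>supp y. \<Sum>r\<in>supp z. x p * y q * z r * lactf e q (H p r) t)"
    proof -
      have "ext (brb e) y (ext H x z) t = (\<Sum>q\<in>supp y. \<Sum>p\<in>supp x. \<Sum>r\<in>supp z. y q * x p * z r * lactf e q (H p r) t)"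
        by (simp add: compC2[OF x z HF] lact_sum[OF HF])
      also have "\<dots> = (\<Sum>p\<in>supp x. \<Sum>q\<in>supp y. \<Sum>r\<in>supp z. y q * x p * z r * lactf e q (H p r) t)"
        by (rule sum.swap)
      finally show ?thesis by (simp add: algebra_simps)
    qed
    have "ext H x (ext (brb e) y z) t = (\<Sum>p\<in>supp x. \<Sum>q\<in>supp y. \<Sum>r\<in>supp z.
        x p * y q * z r * (- lactf e r (H p q) t) + x p * y q * z r * lactf e q (H p r) t)"
      unfolding L
    proof (intro sum.cong refl)
      fix p q r
      have "bk e q r * H p (bt e q r) t = lactf e q (H p r) t - lactf e r (H p q) t"
        using B2 unfolding BD2_def by blast
      then show "x p * y q * z r * (bk e q r * H p (bt e q r) t) =
        x p * y q * z r * - lactf e r (H p q) t + x p * y q * z r * lactf e q (H p r) t"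
        by algebra
    qed
    then show "ext H x (ext (brb e) y z) t = vadd (ext (brb e) (ext H x y) z) (ext (brb e) y (ext H x z)) t"
      by (simp only: vadd_def R1 R2 sum.distrib)
  qed
qed

theorem theorem3p6:
  fixes e :: complex and f :: "sv \<Rightarrow> sv \<Rightarrow> sv"
  assumes "e = 0 \<or> e = 1/2"
    and "bilinear_sv f"
  shows "biderivation e f \<longleftrightarrow>
    (\<exists>(lam::complex) (\<mu>::int \<Rightarrow> complex). finite {i. \<mu> i \<noteq> 0} \<and>
       (\<forall>x\<in>SV. \<forall>y\<in>SV. f x y = vadd (smul lam (br e x y)) (chi \<mu> x y)))"
proof -
  have he: "of_int (tw e) = 2*e" using assms(1) by (auto simp: tw_def mult.commute)
  have bl: "bilinear_sv f" by (rule assms(2))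
  have inSV: "f x y \<in> SV" if "x \<in> SV" "y \<in> SV" for x y using bl that unfolding bilinear_sv_def by blast
  show ?thesis
  proof
    assume bd: "biderivation e f"
    define F where "F = (\<lambda>p q. f (sc 1 p) (sc 1 q))"
    have B1: "BD1 e F" and B2: "BD2 e F" using bider_BD[OF bl bd] by (simp_all add: F_def)
    have finP: "finite (supp (F (L 0) (L 0)))" using inSV[OF sc1SV sc1SV] by (simp add: F_def SV_def)
    obtain lam mu where fmu: "finite {i. mu i \<noteq> 0}"
      and Feq: "\<forall>a b. F a b = (\<lambda>t. lam * brb e a b t + chib mu a b t)"
      using core[OF he B1 B2 finP] by blast
    have FF: "F = (\<lambda>p q t. lam * brb e p q t + chib mu p q t)" using Feq by (simp add: fun_eq_iff)
    have "\<forall>x\<in>SV. \<forall>y\<in>SV. f x y = vadd (smul lam (br e x y)) (chi mu x y)"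
    proof (intro ballI)
      fix x y assume "x \<in> SV" "y \<in> SV"
      then have "f x y = ext F x y" using f_exp[OF bl] by (simp add: F_def)
      then show "f x y = vadd (smul lam (br e x y)) (chi mu x y)" by (simp add: h_ext FF)
    qed
    then show "\<exists>(lam::complex) (\<mu>::int \<Rightarrow> complex). finite {i. \<mu> i \<noteq> 0} \<and>
       (\<forall>x\<in>SV. \<forall>y\<in>SV. f x y = vadd (smul lam (br e x y)) (chi \<mu> x y))" using fmu by blast
  next
    assume "\<exists>(lam::complex) (\<mu>::int \<Rightarrow> complex). finite {i. \<mu> i \<noteq> 0} \<and>
       (\<forall>x\<in>SV. \<forall>y\<in>SV. f x y = vadd (smul lam (br e x y)) (chi \<mu> x y))"
    then obtain lam mu where fmu: "finite {i. mu i \<noteq> 0}"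
      and fe: "\<forall>x\<in>SV. \<forall>y\<in>SV. f x y = vadd (smul lam (br e x y)) (chi mu x y)" by blast
    define H where "H = (\<lambda>p q t. lam * brb e p q t + chib mu p q t)"
    have fH: "f x y = ext H x y" if "x \<in> SV" "y \<in> SV" for x y
      using fe that by (simp add: h_ext H_def)
    have brSV: "br e x y \<in> SV" if "x \<in> SV" "y \<in> SV" for x y
      unfolding br_ext using ext_SV[OF that brbF] .
    show "biderivation e f"
      unfolding biderivation_def
    proof (intro ballI conjI)
      fix x y z assume x: "x \<in> SV" and y: "y \<in> SV" and z: "z \<in> SV"
      show "f (br e x y) z = vadd (br e x (f y z)) (br e (f x z) y)"
        using H_bider(1)[OF he fmu x y z, of lam] fH[OF brSV[OF x y] z] fH[OF y z] fH[OF x z]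
        by (simp add: br_ext H_def)
      show "f x (br e y z) = vadd (br e (f x y) z) (br e y (f x z))"
        using H_bider(2)[OF he fmu x y z, of lam] fH[OF x brSV[OF y z]] fH[OF x y] fH[OF x z]
        by (simp add: br_ext H_def)
    qed
  qed
qed


end
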